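(* The ring $D$ of entire functions (holomorphic functions $\mathbb C\to\mathbb C$) is completely integrally closed (so every nonzero ideal of $D$ is $v$-basic), but not every nonzero ideal of $D$ is $t$-basic.
   Context: For a domain $D$ with quotient field $K$ and nonzero fractional ideal $I$: $I^{-1}=(D:I)=\{x\in K:xI\subseteq D\}$, $I_v=(I^{-1})^{-1}$, $I_t=\bigcup J_v$ over finitely generated subideals $J\subseteq I$. For $\star\in\{v,t\}$ and a nonzero ideal $I$, an ideal $J\subseteq I$ is a $\star$-reduction of $I$ if $(JI^n)^\star=(I^{n+1})^\star$ for some integer $n\ge0$; $I$ is $\star$-basic if every $\star$-reduction $J$ of $I$ satisfies $J^\star=I^\star$. A domain is completely integrally closed iff every nonzero ideal $I$ satisfies $(II^{-1})_v=D$. *)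

theory Defs
  imports "HOL-Analysis.Analysis" "HOL-Library.Function_Algebras"
begin

text \<open>
  Elements of the quotient field K of D are
  written as fractions a/b with a, b in D and b nonzero; all conditions below are the
  literal meaning of the paper's definitions after clearing denominators
  (x = a/b lies in D iff b divides a in D).
\<close>

definition rdvd :: "'a::comm_ring_1 set \<Rightarrow> 'a \<Rightarrow> 'a \<Rightarrow> bool" where
  "rdvd D b a \<longleftrightarrow> (\<exists>c\<in>D. a = b * c)"

definition is_ideal :: "'a::comm_ring_1 set \<Rightarrow> 'a set \<Rightarrow> bool" where
  "is_ideal D I \<longleftrightarrow> I \<subseteq> D \<and> 0 \<in> I \<and> (\<forall>x\<in>I. \<forall>y\<in>I. x + y \<in> I)
      \<and> (\<forall>r\<in>D. \<forall>x\<in>I. r * x \<in> I)"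

definition ideal_gen :: "'a::comm_ring_1 set \<Rightarrow> 'a set \<Rightarrow> 'a set" where
  "ideal_gen D S = {x. \<exists>F c. finite F \<and> F \<subseteq> S \<and> (\<forall>f\<in>F. c f \<in> D) \<and> x = (\<Sum>f\<in>F. c f * f)}"

definition fin_gen_ideal :: "'a::comm_ring_1 set \<Rightarrow> 'a set \<Rightarrow> bool" where
  "fin_gen_ideal D J \<longleftrightarrow> (\<exists>F. finite F \<and> F \<subseteq> D \<and> J = ideal_gen D F)"

definition ideal_prod :: "'a::comm_ring_1 set \<Rightarrow> 'a set \<Rightarrow> 'a set \<Rightarrow> 'a set" where
  "ideal_prod D I J = ideal_gen D {i * j | i j. i \<in> I \<and> j \<in> J}"

fun ideal_pow :: "'a::comm_ring_1 set \<Rightarrow> 'a set \<Rightarrow> nat \<Rightarrow> 'a set" where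
  "ideal_pow D I 0 = D"
| "ideal_pow D I (Suc n) = ideal_prod D I (ideal_pow D I n)"

text \<open>Pairs (a,b) representing the elements a/b of the quotient field lying in
  I^{-1} = (D:I), i.e. with (a/b) I contained in D.\<close>
definition frac_inv :: "'a::comm_ring_1 set \<Rightarrow> 'a set \<Rightarrow> ('a \<times> 'a) set" where
  "frac_inv D I = {(a, b). a \<in> D \<and> b \<in> D \<and> b \<noteq> 0 \<and> (\<forall>i\<in>I. rdvd D b (a * i))}"

text \<open>v-closure of an integral ideal I: I_v = (I^{-1})^{-1}, which is contained in D
  (since 1 lies in I^{-1}); d lies in I_v iff d x lies in D for every x in I^{-1}.\<close>
definition v_closure :: "'a::comm_ring_1 set \<Rightarrow> 'a set \<Rightarrow> 'a set" where
  "v_closure D I = {d \<in> D. \<forall>(a, b)\<in>frac_inv D I. rdvd D b (a * d)}"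

definition t_closure :: "'a::comm_ring_1 set \<Rightarrow> 'a set \<Rightarrow> 'a set" where
  "t_closure D I = \<Union>{v_closure D J | J. fin_gen_ideal D J \<and> J \<subseteq> I}"

definition star_reduction ::
  "('a::comm_ring_1 set \<Rightarrow> 'a set \<Rightarrow> 'a set) \<Rightarrow> 'a set \<Rightarrow> 'a set \<Rightarrow> 'a set \<Rightarrow> bool" where
  "star_reduction st D J I \<longleftrightarrow> is_ideal D J \<and> J \<subseteq> I \<and>
     (\<exists>n. st D (ideal_prod D J (ideal_pow D I n)) = st D (ideal_pow D I (Suc n)))"

definition star_basic ::
  "('a::comm_ring_1 set \<Rightarrow> 'a set \<Rightarrow> 'a set) \<Rightarrow> 'a set \<Rightarrow> 'a set \<Rightarrow> bool" where
  "star_basic st D I \<longleftrightarrow> (\<forall>J. star_reduction st D J I \<longrightarrow> st D J = st D I)"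

text \<open>D is completely integrally closed: every almost integral element x = a/b of the
  quotient field (some nonzero d in D with d x^n in D for all n) lies in D.\<close>
definition completely_integrally_closed :: "'a::comm_ring_1 set \<Rightarrow> bool" where
  "completely_integrally_closed D \<longleftrightarrow>
     (\<forall>a\<in>D. \<forall>b\<in>D. b \<noteq> 0 \<longrightarrow>
        (\<exists>d\<in>D. d \<noteq> 0 \<and> (\<forall>n. rdvd D (b ^ n) (d * a ^ n))) \<longrightarrow> rdvd D b a)"

definition entire_functions :: "(complex \<Rightarrow> complex) set" where
  "entire_functions = {f. f holomorphic_on UNIV}"

end

theory Submission
  imports Defs "HOL-Complex_Analysis.Complex_Analysis"
begin


abbreviation "Dd \<equiv> entire_functions"

lemma D_iff: "f \<in> Dd \<longleftrightarrow> f holomorphic_on UNIV"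
  by (simp add: entire_functions_def)

lemma D_an: "f \<in> Dd \<Longrightarrow> f analytic_on A"
  by (metis D_iff analytic_on_holomorphic open_UNIV subset_UNIV)

lemma D_mult[intro]: "f \<in> Dd \<Longrightarrow> g \<in> Dd \<Longrightarrow> f * g \<in> Dd"
  unfolding D_iff times_fun_def by (intro holomorphic_intros)
lemma D_add[intro]: "f \<in> Dd \<Longrightarrow> g \<in> Dd \<Longrightarrow> f + g \<in> Dd"
  unfolding D_iff plus_fun_def by (intro holomorphic_intros)
lemma D_0[intro]: "(0::complex\<Rightarrow>complex) \<in> Dd"
  unfolding D_iff zero_fun_def by (intro holomorphic_intros)
lemma D_1[intro]: "(1::complex\<Rightarrow>complex) \<in> Dd"
  unfolding D_iff one_fun_def by (intro holomorphic_intros)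
lemma D_pow[intro]: "f \<in> Dd \<Longrightarrow> f ^ n \<in> Dd"
  by (induction n) auto

lemma nz_ev:
  assumes "f \<in> Dd" "f \<noteq> 0"
  shows "eventually (\<lambda>w. f w \<noteq> 0) (at z)"
proof -
  obtain b where "f b \<noteq> 0" using assms(2) by (auto simp: fun_eq_iff)
  from non_zero_neighbour_alt[of f UNIV z b] this assms(1)
  show ?thesis by (auto simp: D_iff elim: eventually_mono)
qed

lemma nz_fr: "f \<in> Dd \<Longrightarrow> f \<noteq> 0 \<Longrightarrow> frequently (\<lambda>w. f w \<noteq> 0) (at z)"
  using nz_ev eventually_frequently by (metis at_neq_bot)

lemma mult_nz: assumes "f \<in> Dd" "g \<in> Dd" "f \<noteq> 0" "g \<noteq> 0" shows "f * g \<noteq> 0"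
proof -
  have "eventually (\<lambda>w. f w \<noteq> 0 \<and> g w \<noteq> 0) (at 0)"
    using eventually_conj[OF nz_ev[OF assms(1,3)] nz_ev[OF assms(2,4)]] .
  then obtain w where "f w \<noteq> 0" "g w \<noteq> 0" using eventually_happens'[OF at_neq_bot] by blast
  then show ?thesis by (auto simp: fun_eq_iff)
qed

lemma zo_ge0: "f \<in> Dd \<Longrightarrow> f \<noteq> 0 \<Longrightarrow> zorder f z \<ge> 0"
  by (intro zorder_ge_0 D_an nz_fr)

lemma zo_pos: "f \<in> Dd \<Longrightarrow> f \<noteq> 0 \<Longrightarrow> zorder f z > 0 \<longleftrightarrow> f z = 0"
  by (intro zorder_pos_iff' D_an nz_fr)

lemma zo_mult: assumes "f \<in> Dd" "g \<in> Dd" "f \<noteq> 0" "g \<noteq> 0"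
  shows "zorder (f * g) z = zorder f z + zorder g z"
proof -
  have "eventually (\<lambda>w. f w * g w \<noteq> 0) (at z)"
    using eventually_conj[OF nz_ev[OF assms(1,3)] nz_ev[OF assms(2,4)]] by (rule eventually_mono) auto
  then show ?thesis unfolding times_fun_def
    by (intro zorder_times_analytic D_an assms)
qed

lemma zo_pow: assumes "f \<in> Dd" "f \<noteq> 0"
  shows "zorder (f ^ n) z = n * zorder f z"
proof -
  have "f ^ n = (\<lambda>w. f w ^ n)" by (induction n) (auto simp: fun_eq_iff)
  then show ?thesis
    using zorder_power[of f z n] D_an[OF assms(1)] nz_fr[OF assms] analytic_on_imp_meromorphic_on
    by auto
qed

lemma DIV:
  assumes a: "a \<in> Dd" "a \<noteq> 0" and b: "b \<in> Dd" "b \<noteq> 0"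
  shows "rdvd Dd b a \<longleftrightarrow> (\<forall>z. zorder b z \<le> zorder a z)"
proof
  assume "rdvd Dd b a"
  then obtain c where c: "c \<in> Dd" "a = b * c" by (auto simp: rdvd_def)
  with a have "c \<noteq> 0" by auto
  show "\<forall>z. zorder b z \<le> zorder a z"
    using zo_mult[OF b(1) c(1) b(2) \<open>c \<noteq> 0\<close>] zo_ge0[OF c(1) \<open>c \<noteq> 0\<close>] c(2) by auto
next
  assume le: "\<forall>z. zorder b z \<le> zorder a z"
  define q where "q = (\<lambda>w. a w / b w)"
  have mq: "q meromorphic_on {z}" for z
    unfolding q_def using D_an[OF a(1)] D_an[OF b(1)]
    by (intro meromorphic_intros analytic_on_imp_meromorphic_on)
  have ana: "remove_sings q analytic_on {z}" for z
  proof -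
    have iso: "isolated_singularity_at q z" and ne: "not_essential q z"
      using mq[of z] meromorphic_at_iff by auto
    have "zorder q z = zorder a z - zorder b z" unfolding q_def
      by (intro zorder_divide analytic_on_imp_meromorphic_on D_an nz_fr a b)
    with le[rule_format, of z] have "zorder q z \<ge> 0" by linarith
    hence "\<not> is_pole q z" using isolated_pole_imp_neg_zorder[OF iso] by fastforce
    with ne obtain c where "q \<midarrow>z\<rightarrow> c" unfolding not_essential_def by auto
    thus ?thesis using remove_sings_analytic_at[OF iso] by blast
  qed
  have "remove_sings q \<in> Dd"
    unfolding D_iff using ana analytic_imp_holomorphic analytic_on_analytic_at by blast
  moreover have "a = b * remove_sings q"
  proof (rule ext)
    fix w
    show "a w = (b * remove_sings q) w"
    proof (cases "b w = 0")
      case True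
      hence "zorder b w > 0" using zo_pos[OF b] by auto
      with le have "zorder a w > 0" by (meson less_le_trans)
      hence "a w = 0" using zo_pos[OF a] by auto
      with True show ?thesis by simp
    next
      case False
      have "q analytic_on {w}" unfolding q_def
        using False D_an[OF a(1)] D_an[OF b(1)] by (intro analytic_intros) auto
      hence "remove_sings q w = q w" by simp
      with False show ?thesis by (simp add: q_def)
    qed
  qed
  ultimately show "rdvd Dd b a" by (auto simp: rdvd_def)
qed

definition pw :: "complex \<Rightarrow> nat \<Rightarrow> complex \<Rightarrow> complex" where
  "pw z k = (\<lambda>w. (w - z) ^ k)"

lemma pw_D[intro]: "pw z k \<in> Dd"
  unfolding pw_def D_iff by (intro holomorphic_intros)

lemma pw_nz: "pw z k \<noteq> 0"
proof
  assume "pw z k = 0"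
  hence "pw z k (z + 1) = 0" by simp
  thus False by (simp add: pw_def)
qed

lemma zo_pw: "zorder (pw z k) w = (if w = z then int k else 0)"
proof (cases "w = z")
  case True
  have "zorder (pw z k) z = int k"
    unfolding pw_def
    by (rule zorder_eqI[where S=UNIV and g="\<lambda>_. 1"]) (auto simp: power_int_def)
  with True show ?thesis by simp
next
  case False
  have "zorder (pw z k) w = 0"
    by (rule zorder_eq_0I) (use False in \<open>auto simp: pw_def intro!: D_an pw_D[unfolded pw_def]\<close>)
  with False show ?thesis by simp
qed

lemma DIVpw: assumes "f \<in> Dd" "f \<noteq> 0"
  shows "rdvd Dd (pw z k) f \<longleftrightarrow> int k \<le> zorder f z"
  using DIV[OF assms pw_D pw_nz] zo_pw zo_ge0[OF assms] by (metis (full_types))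



lemma EX:
  fixes \<mu> :: "nat \<Rightarrow> nat"
  assumes inf: "infinite {m. 1 \<le> m \<and> \<mu> m > 0}"
  shows "\<exists>f\<in>Dd. f \<noteq> 0 \<and> (\<forall>w. f w = 0 \<longrightarrow> (\<exists>m\<ge>1. w = of_nat m)) \<and> (\<forall>m\<ge>1. zorder f (of_nat m) = int (\<mu> m))"
proof -
  define S where "S = {(m, j). 1 \<le> m \<and> j < \<mu> m}"
  have "fst ` S = {m. 1 \<le> m \<and> \<mu> m > 0}"
  proof
    show "fst ` S \<subseteq> {m. 1 \<le> m \<and> \<mu> m > 0}" by (auto simp: S_def)
    show "{m. 1 \<le> m \<and> \<mu> m > 0} \<subseteq> fst ` S"
    proof
      fix m assume "m \<in> {m. 1 \<le> m \<and> \<mu> m > 0}"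
      hence "(m, 0) \<in> S" by (auto simp: S_def)
      thus "m \<in> fst ` S" by force
    qed
  qed
  hence infS: "infinite S" using inf by (metis finite_imageI)
  define e where "e = from_nat_into S"
  have bij: "bij_betw e UNIV S" unfolding e_def
    by (rule bij_betw_from_nat_into[OF _ infS]) simp
  hence inj: "inj e" and rng: "range e = S" by (auto simp: bij_betw_def)
  have eS: "e k \<in> S" for k using rng by auto
  define a where "a = (\<lambda>k. of_nat (fst (e k)) :: complex)"
  have fin_sig: "finite {(m,j). m < N \<and> j < \<mu> m}" for N
  proof -
    have "{(m,j). m < N \<and> j < \<mu> m} = Sigma {..<N} (\<lambda>m. {..<\<mu> m})" by auto
    thus ?thesis by simp
  qed
  interpret W: weierstrass_product' a
  proof
    show "a n \<noteq> 0" for n using eS[of n] by (auto simp: a_def S_def split: prod.splits)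
    show "filterlim a at_infinity at_top"
    proof (subst filterlim_at_infinity[of 0], simp, intro allI impI)
      fix r :: real assume "r > 0"
      define N where "N = nat \<lceil>r\<rceil>"
      have "{k. \<not> r \<le> norm (a k)} \<subseteq> e -` {(m,j). m < N \<and> j < \<mu> m}"
      proof
        fix k assume "k \<in> {k. \<not> r \<le> norm (a k)}"
        hence "real (fst (e k)) < r" by (auto simp: a_def)
        hence "fst (e k) < N" unfolding N_def by linarith
        thus "k \<in> e -` {(m,j). m < N \<and> j < \<mu> m}" using eS[of k]
          by (auto simp: S_def split: prod.splits)
      qed
      hence "finite {k. \<not> r \<le> norm (a k)}"
        using finite_vimageI[OF fin_sig inj] finite_subset by blast
      thus "eventually (\<lambda>k. r \<le> norm (a k)) sequentially"
        by (simp add: cofinite_eq_sequentially[symmetric] eventually_cofinite)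
    qed
    show "finite (a -` {z})" for z
    proof -
      have "a -` {z} \<subseteq> e -` {(m,j). m < nat \<lceil>norm z\<rceil> + 1 \<and> j < \<mu> m}"
      proof
        fix k assume "k \<in> a -` {z}"
        hence "norm z = real (fst (e k))" by (auto simp: a_def)
        hence "fst (e k) < nat \<lceil>norm z\<rceil> + 1" by linarith
        thus "k \<in> e -` {(m,j). m < nat \<lceil>norm z\<rceil> + 1 \<and> j < \<mu> m}" using eS[of k]
          by (auto simp: S_def split: prod.splits)
      qed
      thus ?thesis using finite_vimageI[OF fin_sig inj] finite_subset by blast
    qed
  qed
  have fD: "W.f \<in> Dd" unfolding D_iff by (rule W.holomorphic)
  have fe: "fst (e k) \<ge> 1" for k using eS[of k] by (auto simp: S_def split: prod.splits)
  have z0: "W.f 0 \<noteq> 0"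
  proof
    assume "W.f 0 = 0"
    then obtain k where "0 = a k" using W.zero by auto
    thus False using fe[of k] by (simp add: a_def)
  qed
  hence fnz: "W.f \<noteq> 0" by auto
  have zeros: "\<forall>w. W.f w = 0 \<longrightarrow> (\<exists>m\<ge>1. w = of_nat m)"
  proof (intro allI impI)
    fix w assume "W.f w = 0"
    then obtain k where "w = a k" using W.zero by auto
    thus "\<exists>m\<ge>1. w = of_nat m" using eS[of k] by (auto simp: a_def S_def split: prod.splits)
  qed
  have ords: "\<forall>m\<ge>1. zorder W.f (of_nat m) = int (\<mu> m)"
  proof (intro allI impI)
    fix m :: nat assume m: "m \<ge> 1"
    have "a -` {of_nat m} = e -` ({m} \<times> {..<\<mu> m})"
    proof (rule set_eqI)
      fix k
      obtain m' j where ek: "e k = (m', j)" by fastforce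
      have "j < \<mu> m'" using eS[of k] ek by (auto simp: S_def)
      thus "k \<in> a -` {of_nat m} \<longleftrightarrow> k \<in> e -` ({m} \<times> {..<\<mu> m})"
        using ek by (auto simp: a_def)
    qed
    moreover have "{m} \<times> {..<\<mu> m} \<subseteq> range e" using m rng by (auto simp: S_def)
    ultimately have "card (a -` {of_nat m}) = \<mu> m"
      using card_vimage_inj[OF inj] by (simp add: card_cartesian_product)
    thus "zorder W.f (of_nat m) = int (\<mu> m)" using W.zorder by simp
  qed
  show ?thesis using fD fnz zeros ords by blast
qed



lemma D_sum: "finite F \<Longrightarrow> (\<And>f. f \<in> F \<Longrightarrow> g f \<in> Dd) \<Longrightarrow> (\<Sum>f\<in>F. g f) \<in> Dd"
  by (induction F rule: finite_induct) auto

lemma rdvd_0[intro]: "rdvd Dd a 0"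
  unfolding rdvd_def by (rule bexI[of _ 0]) auto

lemma rdvd_refl[intro]: "rdvd Dd a a"
  unfolding rdvd_def by (rule bexI[of _ 1]) auto

lemma rdvd_trans: "rdvd Dd a b \<Longrightarrow> rdvd Dd b c \<Longrightarrow> rdvd Dd a c"
  unfolding rdvd_def by (metis D_mult mult.assoc)

lemma rdvd_multl: "rdvd Dd a b \<Longrightarrow> r \<in> Dd \<Longrightarrow> rdvd Dd a (r * b)"
  unfolding rdvd_def by (metis D_mult mult.left_commute)

lemma rdvd_add: "rdvd Dd a b \<Longrightarrow> rdvd Dd a c \<Longrightarrow> rdvd Dd a (b + c)"
  unfolding rdvd_def by (metis D_add distrib_left)

lemma rdvd_mult2: "rdvd Dd a b \<Longrightarrow> rdvd Dd c d \<Longrightarrow> rdvd Dd (a * c) (b * d)"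
  unfolding rdvd_def by (metis D_mult mult.assoc mult.left_commute)

lemma rdvd_self_mult: "r \<in> Dd \<Longrightarrow> rdvd Dd a (a * r)"
  unfolding rdvd_def by blast

lemma ideal_dvdset: "b \<in> Dd \<Longrightarrow> is_ideal Dd {x\<in>Dd. rdvd Dd b x}"
  unfolding is_ideal_def by (auto intro: rdvd_add rdvd_multl)

lemma sum_in_ideal:
  assumes "finite F" "F \<subseteq> A" "\<forall>f\<in>F. c f \<in> Dd" "is_ideal Dd A"
  shows "(\<Sum>f\<in>F. c f * f) \<in> A"
  using assms by (induction F rule: finite_induct) (auto simp: is_ideal_def)

lemma gen_min: "is_ideal Dd A \<Longrightarrow> S \<subseteq> A \<Longrightarrow> ideal_gen Dd S \<subseteq> A"
  unfolding ideal_gen_def using sum_in_ideal by blast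

lemma gen_sub: "S \<subseteq> Dd \<Longrightarrow> S \<subseteq> ideal_gen Dd S"
proof
  fix s assume "S \<subseteq> Dd" "s \<in> S"
  then show "s \<in> ideal_gen Dd S" unfolding ideal_gen_def
    by (intro CollectI exI[of _ "{s}"] exI[of _ "\<lambda>_. 1"]) auto
qed

lemma gen_D: "S \<subseteq> Dd \<Longrightarrow> ideal_gen Dd S \<subseteq> Dd"
  unfolding ideal_gen_def by (auto intro!: D_sum D_mult)

lemma gen_mono: "S \<subseteq> S' \<Longrightarrow> ideal_gen Dd S \<subseteq> ideal_gen Dd S'"
  unfolding ideal_gen_def by blast

lemma gen_ideal:
  assumes SD: "S \<subseteq> Dd"
  shows "is_ideal Dd (ideal_gen Dd S)"
  unfolding is_ideal_def
proof (intro conjI ballI)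
  show "ideal_gen Dd S \<subseteq> Dd" by (rule gen_D[OF SD])
  show "0 \<in> ideal_gen Dd S" unfolding ideal_gen_def
    by (intro CollectI exI[of _ "{}"]) auto
next
  fix x y assume "x \<in> ideal_gen Dd S" "y \<in> ideal_gen Dd S"
  then obtain F1 c1 F2 c2 where
    1: "finite F1" "F1 \<subseteq> S" "\<forall>f\<in>F1. c1 f \<in> Dd" "x = (\<Sum>f\<in>F1. c1 f * f)" and
    2: "finite F2" "F2 \<subseteq> S" "\<forall>f\<in>F2. c2 f \<in> Dd" "y = (\<Sum>f\<in>F2. c2 f * f)"
    unfolding ideal_gen_def by blast
  define c where "c f = (if f \<in> F1 then c1 f else 0) + (if f \<in> F2 then c2 f else 0)" for f
  have "(\<Sum>f\<in>F1 \<union> F2. c f * f) = (\<Sum>f\<in>F1 \<union> F2. (if f \<in> F1 then c1 f * f else 0))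
      + (\<Sum>f\<in>F1 \<union> F2. (if f \<in> F2 then c2 f * f else 0))"
    unfolding sum.distrib[symmetric] by (intro sum.cong refl) (simp add: c_def distrib_right)
  also have "(\<Sum>f\<in>F1 \<union> F2. (if f \<in> F1 then c1 f * f else 0)) = x"
    using 1 2 by (simp add: sum.If_cases Int_absorb1)
  also have "(\<Sum>f\<in>F1 \<union> F2. (if f \<in> F2 then c2 f * f else 0)) = y"
    using 1 2 by (simp add: sum.If_cases Int_absorb1)
  finally have "x + y = (\<Sum>f\<in>F1 \<union> F2. c f * f)" by (rule sym)
  moreover have "\<forall>f\<in>F1 \<union> F2. c f \<in> Dd" using 1 2 by (auto simp: c_def)
  ultimately show "x + y \<in> ideal_gen Dd S" unfolding ideal_gen_def
    using 1 2 by (intro CollectI exI[of _ "F1 \<union> F2"] exI[of _ c]) auto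
next
  fix r x assume r: "r \<in> Dd" and "x \<in> ideal_gen Dd S"
  then obtain F c where 1: "finite F" "F \<subseteq> S" "\<forall>f\<in>F. c f \<in> Dd" "x = (\<Sum>f\<in>F. c f * f)"
    unfolding ideal_gen_def by blast
  have "r * x = (\<Sum>f\<in>F. (r * c f) * f)" using 1 by (simp add: sum_distrib_left mult.assoc)
  thus "r * x \<in> ideal_gen Dd S" unfolding ideal_gen_def using 1 r
    by (intro CollectI exI[of _ F] exI[of _ "\<lambda>f. r * c f"]) auto
qed

lemma gen_dvd: "b \<in> Dd \<Longrightarrow> S \<subseteq> Dd \<Longrightarrow> (\<And>s. s \<in> S \<Longrightarrow> rdvd Dd b s) \<Longrightarrow> x \<in> ideal_gen Dd S \<Longrightarrow> rdvd Dd b x"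
  using gen_min[OF ideal_dvdset, of b S] by blast

lemma prod_D: "A \<subseteq> Dd \<Longrightarrow> B \<subseteq> Dd \<Longrightarrow> ideal_prod Dd A B \<subseteq> Dd"
  unfolding ideal_prod_def by (rule gen_D) auto

lemma prod_in: "A \<subseteq> Dd \<Longrightarrow> B \<subseteq> Dd \<Longrightarrow> a \<in> A \<Longrightarrow> b \<in> B \<Longrightarrow> a * b \<in> ideal_prod Dd A B"
  unfolding ideal_prod_def by (rule gen_sub[THEN subsetD]) auto

lemma pow_D: "A \<subseteq> Dd \<Longrightarrow> ideal_pow Dd A n \<subseteq> Dd"
  by (induction n) (auto intro: prod_D[THEN subsetD])

lemma prod_D_right: assumes "is_ideal Dd I" shows "ideal_prod Dd I Dd = I"
proof
  show "ideal_prod Dd I Dd \<subseteq> I" unfolding ideal_prod_def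
  proof (intro gen_min[OF assms], clarify)
    fix i j assume "i \<in> I" "j \<in> Dd"
    hence "j * i \<in> I" using assms by (auto simp: is_ideal_def)
    thus "i * j \<in> I" by (simp only: mult.commute)
  qed
  show "I \<subseteq> ideal_prod Dd I Dd"
  proof
    fix i assume "i \<in> I"
    hence "i * 1 \<in> ideal_prod Dd I Dd" using assms by (intro prod_in) (auto simp: is_ideal_def)
    thus "i \<in> ideal_prod Dd I Dd" by simp
  qed
qed

lemma v_sub: "A \<subseteq> Dd \<Longrightarrow> A \<subseteq> v_closure Dd A"
  unfolding v_closure_def frac_inv_def by auto

lemma VC1: assumes "d \<in> v_closure Dd A" "\<forall>a\<in>A. rdvd Dd (pw z k) a"
  shows "rdvd Dd (pw z k) d"
proof -
  have "(1, pw z k) \<in> frac_inv Dd A" unfolding frac_inv_def using assms(2) pw_nz by auto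
  with assms(1) show ?thesis unfolding v_closure_def by auto
qed

lemma VC2: assumes AD: "A \<subseteq> Dd" and d: "d \<in> Dd"
  and H: "\<And>z k. \<forall>a\<in>A. rdvd Dd (pw z k) a \<Longrightarrow> rdvd Dd (pw z k) d"
  shows "d \<in> v_closure Dd A"
  unfolding v_closure_def
proof (intro CollectI conjI d ballI, clarify)
  fix a b assume "(a, b) \<in> frac_inv Dd A"
  hence a: "a \<in> Dd" and b: "b \<in> Dd" "b \<noteq> 0" and ab: "\<forall>i\<in>A. rdvd Dd b (a * i)"
    by (auto simp: frac_inv_def)
  show "rdvd Dd b (a * d)"
  proof (cases "a * d = 0")
    case True thus ?thesis by auto
  next
    case False
    hence a0: "a \<noteq> 0" and d0: "d \<noteq> 0" by auto
    have adD: "a * d \<in> Dd" using a d by auto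
    have "zorder b z \<le> zorder (a * d) z" for z
    proof -
      have ga: "zorder a z \<ge> 0" and gb: "zorder b z \<ge> 0" using zo_ge0 a a0 b by auto
      define k where "k = nat (zorder b z - zorder a z)"
      have "\<forall>i\<in>A. rdvd Dd (pw z k) i"
      proof
        fix i assume i: "i \<in> A"
        show "rdvd Dd (pw z k) i"
        proof (cases "i = 0")
          case True thus ?thesis by auto
        next
          case False
          have iD: "i \<in> Dd" using i AD by auto
          have "a * i \<noteq> 0" using mult_nz a a0 iD False by auto
          hence "zorder b z \<le> zorder (a * i) z"
            using ab i DIV[of "a * i" b] a iD b by auto
          also have "\<dots> = zorder a z + zorder i z" using zo_mult a iD a0 False by auto
          finally have "int k \<le> zorder i z" unfolding k_def using zo_ge0[OF iD False, of z] by linarith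
          thus ?thesis using DIVpw[OF iD False] by auto
        qed
      qed
      hence "rdvd Dd (pw z k) d" by (rule H)
      hence "int k \<le> zorder d z" using DIVpw[OF d d0] by auto
      thus ?thesis unfolding k_def using zo_mult[OF a d a0 d0, of z] by linarith
    qed
    thus ?thesis using DIV[OF adD False b] by auto
  qed
qed

definition L :: "(complex \<Rightarrow> complex) set \<Rightarrow> complex \<Rightarrow> nat set" where
  "L A z = {k. \<forall>a\<in>A. rdvd Dd (pw z k) a}"

lemma v_eq_L: assumes "A \<subseteq> Dd" "B \<subseteq> Dd" "v_closure Dd A = v_closure Dd B"
  shows "L A z = L B z"
proof -
  have *: "L A z \<subseteq> L B z" if "A \<subseteq> Dd" "B \<subseteq> Dd" "v_closure Dd A = v_closure Dd B" for A B
  proof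
    fix k assume k: "k \<in> L A z"
    show "k \<in> L B z" unfolding L_def
    proof (intro CollectI ballI)
      fix b assume "b \<in> B"
      hence "b \<in> v_closure Dd A" using v_sub[OF that(2)] that(3) by auto
      thus "rdvd Dd (pw z k) b" using VC1 k by (auto simp: L_def)
    qed
  qed
  show ?thesis using *[OF assms] *[OF assms(2,1) assms(3)[symmetric]] by auto
qed

lemma L_eq_v: assumes "A \<subseteq> Dd" "B \<subseteq> Dd" "\<And>z. L A z = L B z"
  shows "v_closure Dd A = v_closure Dd B"
proof -
  have *: "v_closure Dd A \<subseteq> v_closure Dd B" if "A \<subseteq> Dd" "B \<subseteq> Dd" "\<And>z. L A z = L B z" for A B
  proof
    fix d assume d: "d \<in> v_closure Dd A"
    hence dD: "d \<in> Dd" by (auto simp: v_closure_def)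
    show "d \<in> v_closure Dd B"
    proof (rule VC2[OF that(2) dD])
      fix z k assume "\<forall>a\<in>B. rdvd Dd (pw z k) a"
      hence "k \<in> L A z" using that(3)[of z] by (auto simp: L_def)
      thus "rdvd Dd (pw z k) d" using VC1[OF d] by (auto simp: L_def)
    qed
  qed
  show ?thesis using *[OF assms] *[OF assms(2,1)] assms(3) by (metis subset_antisym)
qed



lemma pw_0: "pw z 0 = 1" by (simp add: pw_def one_fun_def)
lemma pw_add: "pw z (k + k') = pw z k * pw z k'"
  by (simp add: pw_def fun_eq_iff power_add)

lemma rdvd_1: "a \<in> Dd \<Longrightarrow> rdvd Dd 1 a"
  unfolding rdvd_def by auto

lemma L0: "A \<subseteq> Dd \<Longrightarrow> 0 \<in> L A z"
  using rdvd_1 by (auto simp: L_def pw_0)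

lemma L_down: assumes "k \<in> L A z" "k' \<le> k" shows "k' \<in> L A z"
proof -
  have "pw z k = pw z k' * pw z (k - k')" using assms(2) pw_add[of z k' "k - k'"] by simp
  hence "rdvd Dd (pw z k') (pw z k)" using rdvd_self_mult[OF pw_D] by metis
  thus ?thesis using assms(1) rdvd_trans unfolding L_def by blast
qed

lemma L_bound: "A \<subseteq> Dd \<Longrightarrow> a \<in> A \<Longrightarrow> a \<noteq> 0 \<Longrightarrow> k \<in> L A z \<Longrightarrow> int k \<le> zorder a z"
  unfolding L_def using DIVpw by blast

definition m :: "(complex \<Rightarrow> complex) set \<Rightarrow> complex \<Rightarrow> nat" where
  "m A z = Max (L A z)"

lemma m_char: assumes "A \<subseteq> Dd" "a \<in> A" "a \<noteq> 0"
  shows "k \<in> L A z \<longleftrightarrow> k \<le> m A z"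
proof -
  have "L A z \<subseteq> {..nat (zorder a z)}" using L_bound[OF assms] by fastforce
  hence fin: "finite (L A z)" by (rule finite_subset) simp
  have ne: "L A z \<noteq> {}" using L0[OF assms(1)] by auto
  show ?thesis
  proof
    assume "k \<in> L A z" thus "k \<le> m A z" unfolding m_def using fin by simp
  next
    assume "k \<le> m A z"
    moreover have "m A z \<in> L A z" unfolding m_def using fin ne by (rule Max_in)
    ultimately show "k \<in> L A z" using L_down by blast
  qed
qed

lemma zo_1: "zorder (1 :: complex \<Rightarrow> complex) z = 0"
  by (simp add: one_fun_def)

lemma m_prod:
  assumes AD: "A \<subseteq> Dd" and BD: "B \<subseteq> Dd" and a: "a \<in> A" "a \<noteq> 0" and b: "b \<in> B" "b \<noteq> 0"
  shows "a * b \<in> ideal_prod Dd A B" "a * b \<noteq> 0" "m (ideal_prod Dd A B) z = m A z + m B z"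
proof -
  show ab: "a * b \<in> ideal_prod Dd A B" by (rule prod_in[OF AD BD a(1) b(1)])
  show abnz: "a * b \<noteq> 0" using mult_nz a b AD BD by auto
  have PD: "ideal_prod Dd A B \<subseteq> Dd" by (rule prod_D[OF AD BD])
  have "m A z + m B z \<in> L (ideal_prod Dd A B) z"
    unfolding L_def
  proof (intro CollectI ballI)
    fix x assume x: "x \<in> ideal_prod Dd A B"
    show "rdvd Dd (pw z (m A z + m B z)) x"
    proof (rule gen_dvd[OF pw_D _ _ x[unfolded ideal_prod_def]])
      show "{i * j |i j. i \<in> A \<and> j \<in> B} \<subseteq> Dd" using AD BD by auto
      fix s assume "s \<in> {i * j |i j. i \<in> A \<and> j \<in> B}"
      then obtain i j where s: "s = i * j" "i \<in> A" "j \<in> B" by auto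
      have "m A z \<in> L A z" "m B z \<in> L B z" using m_char AD BD a b by auto
      hence "rdvd Dd (pw z (m A z)) i" "rdvd Dd (pw z (m B z)) j" using s by (auto simp: L_def)
      thus "rdvd Dd (pw z (m A z + m B z)) s" unfolding pw_add s by (rule rdvd_mult2)
    qed
  qed
  hence ge: "m A z + m B z \<le> m (ideal_prod Dd A B) z" using m_char[OF PD ab abnz] by auto
  have "Suc (m A z) \<notin> L A z" using m_char[OF AD a] by auto
  then obtain a0 where a0: "a0 \<in> A" "\<not> rdvd Dd (pw z (Suc (m A z))) a0" by (auto simp: L_def)
  have "Suc (m B z) \<notin> L B z" using m_char[OF BD b] by auto
  then obtain b0 where b0: "b0 \<in> B" "\<not> rdvd Dd (pw z (Suc (m B z))) b0" by (auto simp: L_def)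
  have a0nz: "a0 \<noteq> 0" and b0nz: "b0 \<noteq> 0" using a0 b0 by auto
  have a0D: "a0 \<in> Dd" and b0D: "b0 \<in> Dd" using a0 b0 AD BD by auto
  have za: "zorder a0 z \<le> int (m A z)" using a0(2) DIVpw[OF a0D a0nz] by auto
  have zb: "zorder b0 z \<le> int (m B z)" using b0(2) DIVpw[OF b0D b0nz] by auto
  have "m (ideal_prod Dd A B) z \<in> L (ideal_prod Dd A B) z" using m_char[OF PD ab abnz] by auto
  moreover have "a0 * b0 \<in> ideal_prod Dd A B" by (rule prod_in[OF AD BD a0(1) b0(1)])
  moreover have "a0 * b0 \<noteq> 0" using mult_nz a0D b0D a0nz b0nz by auto
  ultimately have "int (m (ideal_prod Dd A B) z) \<le> zorder (a0 * b0) z"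
    using L_bound[OF PD] by blast
  also have "\<dots> = zorder a0 z + zorder b0 z" by (rule zo_mult[OF a0D b0D a0nz b0nz])
  finally show "m (ideal_prod Dd A B) z = m A z + m B z" using ge za zb by linarith
qed

lemma m_pow:
  assumes AD: "A \<subseteq> Dd" and a: "a \<in> A" "a \<noteq> 0"
  shows "\<exists>x\<in>ideal_pow Dd A n. x \<noteq> 0 \<and> (\<forall>z. m (ideal_pow Dd A n) z = n * m A z)"
proof (induction n)
  case 0
  have "(1::complex\<Rightarrow>complex) \<noteq> 0" by (simp add: fun_eq_iff)
  moreover have "m Dd z = 0" for z
  proof -
    have "m Dd z \<in> L Dd z" using m_char[of Dd 1 "m Dd z" z] \<open>1 \<noteq> 0\<close> by auto
    hence "int (m Dd z) \<le> zorder 1 z" using L_bound[of Dd 1] \<open>1 \<noteq> 0\<close> by auto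
    thus ?thesis using zo_1 by simp
  qed
  ultimately show ?case apply (simp only: ideal_pow.simps mult_0) by blast
next
  case (Suc n)
  then obtain x where x: "x \<in> ideal_pow Dd A n" "x \<noteq> 0" "\<forall>z. m (ideal_pow Dd A n) z = n * m A z" by blast
  have PD: "ideal_pow Dd A n \<subseteq> Dd" by (rule pow_D[OF AD])
  note mp = m_prod[OF AD PD a x(1,2)]
  have "\<forall>z. m (ideal_pow Dd A (Suc n)) z = Suc n * m A z" using mp(3) x(3) by simp
  thus ?case using mp(1,2) by (simp only: ideal_pow.simps) blast
qed

lemma vbasic:
  assumes I: "is_ideal Dd I" "I \<noteq> {0}"
  shows "star_basic v_closure Dd I"
  unfolding star_basic_def
proof (intro allI impI)
  fix J assume "star_reduction v_closure Dd J I"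
  then obtain n where J: "is_ideal Dd J" "J \<subseteq> I"
    and eq: "v_closure Dd (ideal_prod Dd J (ideal_pow Dd I n)) = v_closure Dd (ideal_pow Dd I (Suc n))"
    by (auto simp: star_reduction_def)
  have ID: "I \<subseteq> Dd" and JD: "J \<subseteq> Dd" using I J by (auto simp: is_ideal_def)
  obtain i0 where i0: "i0 \<in> I" "i0 \<noteq> 0" using I by (auto simp: is_ideal_def)
  define K where "K = ideal_pow Dd I n"
  have KD: "K \<subseteq> Dd" unfolding K_def by (rule pow_D[OF ID])
  obtain x where x: "x \<in> K" "x \<noteq> 0" using m_pow[OF ID i0, of n] by (auto simp: K_def)
  have LL: "L (ideal_prod Dd J K) z = L (ideal_prod Dd I K) z" for z
    using v_eq_L[OF prod_D[OF JD KD] prod_D[OF ID KD]] eq by (simp add: K_def)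
  show "v_closure Dd J = v_closure Dd I"
  proof (cases "\<exists>j\<in>J. j \<noteq> 0")
    case True
    then obtain j0 where j0: "j0 \<in> J" "j0 \<noteq> 0" by auto
    have "L J z = L I z" for z
    proof -
      note p1 = m_prod(1,2)[OF JD KD j0 x] m_prod(3)[OF JD KD j0 x, of z]
        and p2 = m_prod(1,2)[OF ID KD i0 x] m_prod(3)[OF ID KD i0 x, of z]
      have "m (ideal_prod Dd J K) z = m (ideal_prod Dd I K) z"
        using m_char[OF prod_D[OF JD KD] p1(1,2)] m_char[OF prod_D[OF ID KD] p2(1,2)] LL[of z]
        by (metis le_antisym order_refl)
      hence "m J z = m I z" using p1(3) p2(3) by simp
      thus ?thesis using m_char[OF JD j0] m_char[OF ID i0] by auto
    qed
    thus ?thesis by (rule L_eq_v[OF JD ID])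
  next
    case False
    hence J0: "\<forall>j\<in>J. j = 0" by auto
    fix z
    have "k \<in> L (ideal_prod Dd J K) z" for k
      unfolding L_def
    proof (intro CollectI ballI)
      fix y assume "y \<in> ideal_prod Dd J K"
      hence y: "y \<in> ideal_gen Dd {i * j |i j. i \<in> J \<and> j \<in> K}" unfolding ideal_prod_def .
      show "rdvd Dd (pw z k) y"
      proof (rule gen_dvd[OF pw_D _ _ y])
        show "{i * j |i j. i \<in> J \<and> j \<in> K} \<subseteq> Dd" using JD KD by auto
        fix s assume "s \<in> {i * j |i j. i \<in> J \<and> j \<in> K}"
        then obtain i j where "s = i * j" "i \<in> J" by auto
        hence "s = 0" using J0 by (metis mult_zero_left)
        thus "rdvd Dd (pw z k) s" by (metis rdvd_0)
      qed
    qed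
    hence "Suc (m (ideal_prod Dd I K) z) \<in> L (ideal_prod Dd I K) z" using LL by auto
    hence False using m_char[OF prod_D[OF ID KD] m_prod(1,2)[OF ID KD i0 x]] by auto
    thus ?thesis ..
  qed
qed

lemma pow_nz: assumes "f \<in> Dd" "f \<noteq> 0" shows "f ^ n \<noteq> 0"
proof (induction n)
  case 0 thus ?case by (simp add: fun_eq_iff)
next
  case (Suc n) thus ?case using mult_nz[OF assms(1) D_pow[OF assms(1)] assms(2) Suc.IH] by (metis power_Suc)
qed

lemma cic: "completely_integrally_closed Dd"
  unfolding completely_integrally_closed_def
proof (intro ballI impI)
  fix a b assume a: "a \<in> Dd" and b: "b \<in> Dd" "b \<noteq> 0"
    and "\<exists>d\<in>Dd. d \<noteq> 0 \<and> (\<forall>n. rdvd Dd (b ^ n) (d * a ^ n))"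
  then obtain d where d: "d \<in> Dd" "d \<noteq> 0" and H: "\<And>n. rdvd Dd (b ^ n) (d * a ^ n)" by auto
  show "rdvd Dd b a"
  proof (cases "a = 0")
    case True thus ?thesis by auto
  next
    case False
    have "zorder b z \<le> zorder a z" for z
    proof (rule ccontr)
      assume "\<not> ?thesis"
      hence lt: "zorder a z + 1 \<le> zorder b z" by simp
      define N where "N = Suc (nat (zorder d z))"
      have bN: "b ^ N \<in> Dd" "b ^ N \<noteq> 0" using b pow_nz by auto
      have aN: "a ^ N \<in> Dd" "a ^ N \<noteq> 0" using a False pow_nz by auto
      have daN: "d * a ^ N \<in> Dd" "d * a ^ N \<noteq> 0" using d aN mult_nz by auto
      have "zorder (b ^ N) z \<le> zorder (d * a ^ N) z" using H[of N] DIV[OF daN bN] by auto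
      also have "\<dots> = zorder d z + N * zorder a z"
        using zo_mult[OF d(1) aN(1) d(2) aN(2)] zo_pow[OF a False] by simp
      finally have 1: "N * zorder b z \<le> zorder d z + N * zorder a z" using zo_pow[OF b] by simp
      have "int N * (zorder a z + 1) \<le> int N * zorder b z" using lt by (intro mult_left_mono) auto
      hence "int N * zorder a z + int N \<le> int N * zorder b z" by (simp add: algebra_simps)
      moreover have "zorder d z < int N" unfolding N_def by linarith
      ultimately show False using 1 by linarith
    qed
    thus ?thesis using DIV[OF a False b] by auto
  qed
qed



lemma pw_dvd: "k' \<le> k \<Longrightarrow> rdvd Dd (pw z k') (pw z k)"
proof -
  assume "k' \<le> k"
  hence "pw z k = pw z k' * pw z (k - k')" using pw_add[of z k' "k - k'"] by simp
  thus ?thesis using rdvd_self_mult[OF pw_D] by metis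
qed

definition I0 :: "(complex \<Rightarrow> complex) set" where
  "I0 = {f \<in> Dd. \<exists>C. \<forall>m\<ge>1. rdvd Dd (pw (of_nat m) (m - C)) f}"

definition J0 :: "(complex \<Rightarrow> complex) set" where
  "J0 = {f \<in> I0. \<exists>N. \<forall>m\<ge>N. rdvd Dd (pw (of_nat m) m) f}"

lemma J0_sub: "J0 \<subseteq> I0" unfolding J0_def by auto

lemma I0_ideal: "is_ideal Dd I0"
  unfolding is_ideal_def
proof (intro conjI ballI)
  show "I0 \<subseteq> Dd" by (auto simp: I0_def)
  show "0 \<in> I0" by (auto simp: I0_def)
next
  fix x y assume "x \<in> I0" "y \<in> I0"
  then obtain C1 C2 where x: "x \<in> Dd" "\<forall>m\<ge>1. rdvd Dd (pw (of_nat m) (m - C1)) x"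
    and y: "y \<in> Dd" "\<forall>m\<ge>1. rdvd Dd (pw (of_nat m) (m - C2)) y" by (auto simp: I0_def)
  have "\<forall>m\<ge>1. rdvd Dd (pw (of_nat m) (m - max C1 C2)) (x + y)"
  proof (intro allI impI)
    fix m :: nat assume "m \<ge> 1"
    have "rdvd Dd (pw (of_nat m) (m - max C1 C2)) x"
      using rdvd_trans[OF pw_dvd x(2)[rule_format, OF \<open>m\<ge>1\<close>]] by simp
    moreover have "rdvd Dd (pw (of_nat m) (m - max C1 C2)) y"
      using rdvd_trans[OF pw_dvd y(2)[rule_format, OF \<open>m\<ge>1\<close>]] by simp
    ultimately show "rdvd Dd (pw (of_nat m) (m - max C1 C2)) (x + y)" by (rule rdvd_add)
  qed
  thus "x + y \<in> I0" using x y by (auto simp: I0_def)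
next
  fix r x assume "r \<in> Dd" "x \<in> I0"
  thus "r * x \<in> I0" by (auto simp: I0_def intro: rdvd_multl)
qed

lemma J0_ideal: "is_ideal Dd J0"
  unfolding is_ideal_def
proof (intro conjI ballI)
  show "J0 \<subseteq> Dd" using J0_sub I0_ideal by (auto simp: is_ideal_def)
  show "0 \<in> J0" using I0_ideal by (auto simp: J0_def is_ideal_def)
next
  fix x y assume "x \<in> J0" "y \<in> J0"
  then obtain N1 N2 where x: "x \<in> I0" "\<forall>m\<ge>N1. rdvd Dd (pw (of_nat m) m) x"
    and y: "y \<in> I0" "\<forall>m\<ge>N2. rdvd Dd (pw (of_nat m) m) y" by (auto simp: J0_def)
  have "\<forall>m\<ge>max N1 N2. rdvd Dd (pw (of_nat m) m) (x + y)"
    using x(2) y(2) by (auto intro: rdvd_add)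
  moreover have "x + y \<in> I0" using x y I0_ideal by (auto simp: is_ideal_def)
  ultimately show "x + y \<in> J0" unfolding J0_def by blast
next
  fix r x assume "r \<in> Dd" "x \<in> J0"
  thus "r * x \<in> J0" using I0_ideal by (auto simp: J0_def is_ideal_def intro: rdvd_multl)
qed

lemma key:
  assumes f: "f \<in> I0" and g: "g \<in> I0"
  shows "f * g \<in> ideal_gen Dd {j * i |j i. j \<in> J0 \<and> i \<in> I0}"
proof (cases "f * g = 0")
  case True
  have "is_ideal Dd (ideal_gen Dd {j * i |j i. j \<in> J0 \<and> i \<in> I0})"
    using J0_ideal I0_ideal by (intro gen_ideal) (auto simp: is_ideal_def)
  thus ?thesis using True by (simp add: is_ideal_def)
next
  case False
  hence f0: "f \<noteq> 0" and g0: "g \<noteq> 0" by auto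
  obtain C1 C2 where fD: "f \<in> Dd" and fC: "\<forall>m\<ge>1. rdvd Dd (pw (of_nat m) (m - C1)) f"
    and gD: "g \<in> Dd" and gC: "\<forall>m\<ge>1. rdvd Dd (pw (of_nat m) (m - C2)) g"
    using f g by (auto simp: I0_def)
  define C where "C = C1 + C2"
  have fgD: "f * g \<in> Dd" using fD gD by auto
  have zfg: "int m - int C1 + (int m - int C2) \<le> zorder (f * g) (of_nat m)"
       "0 \<le> zorder f (of_nat m)" "0 \<le> zorder g (of_nat m)"
    if "m \<ge> 1" for m
  proof -
    have "int (m - C1) \<le> zorder f (of_nat m)" using fC that DIVpw[OF fD f0] by auto
    moreover have "int (m - C2) \<le> zorder g (of_nat m)" using gC that DIVpw[OF gD g0] by auto
    ultimately show "int m - int C1 + (int m - int C2) \<le> zorder (f * g) (of_nat m)"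
      using zo_mult[OF fD gD f0 g0] by fastforce
    show "0 \<le> zorder f (of_nat m)" "0 \<le> zorder g (of_nat m)" using zo_ge0 fD gD f0 g0 by auto
  qed
  have inf: "infinite {m. 1 \<le> m \<and> (\<lambda>m. m - C) m > 0}"
  proof
    assume "finite {m. 1 \<le> m \<and> (\<lambda>m. m - C) m > 0}"
    then obtain B where "\<forall>x\<in>{m. 1 \<le> m \<and> (\<lambda>m. m - C) m > 0}. x \<le> B"
      using finite_nat_set_iff_bounded_le by blast
    hence "Suc (B + C) \<le> B" by auto
    thus False by simp
  qed
  obtain p where pD: "p \<in> Dd" and p0: "p \<noteq> 0" and pz: "\<forall>w. p w = 0 \<longrightarrow> (\<exists>m\<ge>1. w = of_nat m)"
    and pm: "\<forall>m\<ge>1. zorder p (of_nat m) = int (m - C)"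
    using EX[OF inf] by auto
  have "zorder p w \<le> zorder (f * g) w" for w
  proof (cases "p w = 0")
    case False
    hence "zorder p w = 0" using zo_pos[OF pD p0, of w] zo_ge0[OF pD p0, of w] by auto
    thus ?thesis using zo_ge0[OF fgD \<open>f * g \<noteq> 0\<close>, of w] by simp
  next
    case True
    then obtain m where m: "m \<ge> 1" "w = of_nat m" using pz by auto
    have ge: "0 \<le> zorder (f * g) w" by (rule zo_ge0[OF fgD \<open>f * g \<noteq> 0\<close>])
    have "int (m - C) \<le> zorder (f * g) w"
    proof (cases "C \<le> m")
      case True
      thus ?thesis using zfg[OF m(1)] m(2) unfolding C_def by (simp add: of_nat_diff)
    next
      case False thus ?thesis using ge by simp
    qed
    thus ?thesis using pm m by auto
  qed
  hence "rdvd Dd p (f * g)" using DIV[OF fgD \<open>f * g \<noteq> 0\<close> pD p0] by auto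
  then obtain j where jD: "j \<in> Dd" and fgj: "f * g = p * j" by (auto simp: rdvd_def)
  have j0: "j \<noteq> 0" using fgj \<open>f * g \<noteq> 0\<close> by auto
  have zj: "zorder (f * g) w = zorder p w + zorder j w" for w
    using fgj zo_mult[OF pD jD p0 j0] by simp
  have pI: "p \<in> I0" unfolding I0_def
    using pD pm DIVpw[OF pD p0] by (auto intro!: exI[of _ C])
  have jb: "int (m - C) \<le> zorder j (of_nat m) \<and> (m \<ge> C \<longrightarrow> int m \<le> zorder j (of_nat m))" if "m \<ge> 1" for m
  proof (cases "C \<le> m")
    case True
    have "zorder p (of_nat m) = int m - int C" using pm that True by (simp add: of_nat_diff)
    hence "int m \<le> zorder j (of_nat m)"
      using zj[of "of_nat m"] zfg[OF that] unfolding C_def by linarith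
    thus ?thesis using True by (simp add: of_nat_diff)
  next
    case False
    thus ?thesis using zo_ge0[OF jD j0, of "of_nat m"] by simp
  qed
  have 1: "\<forall>m\<ge>1. rdvd Dd (pw (of_nat m) (m - C)) j"
    using jb DIVpw[OF jD j0] by auto
  have 2: "\<forall>m\<ge>Suc C. rdvd Dd (pw (of_nat m) m) j"
  proof (intro allI impI)
    fix m :: nat assume "m \<ge> Suc C"
    thus "rdvd Dd (pw (of_nat m) m) j" using jb[of m] DIVpw[OF jD j0] by auto
  qed
  have jJ: "j \<in> J0" unfolding J0_def I0_def using jD 1 2 by blast
  have "f * g = j * p" using fgj by (simp only: mult.commute)
  hence "f * g \<in> {j * i |j i. j \<in> J0 \<and> i \<in> I0}" using jJ pI by blast
  thus ?thesis using J0_ideal I0_ideal gen_sub[of "{j * i |j i. j \<in> J0 \<and> i \<in> I0}"]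
    by (auto simp: is_ideal_def)
qed



lemma I0D: "I0 \<subseteq> Dd" and J0D: "J0 \<subseteq> Dd"
  using I0_ideal J0_ideal by (auto simp: is_ideal_def)

lemma prod_eq: "ideal_prod Dd J0 I0 = ideal_prod Dd I0 I0"
proof
  show "ideal_prod Dd J0 I0 \<subseteq> ideal_prod Dd I0 I0"
    unfolding ideal_prod_def using J0_sub by (intro gen_mono) blast
  have "{j * i |j i. j \<in> J0 \<and> i \<in> I0} \<subseteq> Dd" using J0D I0D by auto
  hence id: "is_ideal Dd (ideal_prod Dd J0 I0)" unfolding ideal_prod_def by (rule gen_ideal)
  show "ideal_prod Dd I0 I0 \<subseteq> ideal_prod Dd J0 I0"
    unfolding ideal_prod_def
    by (rule gen_min[OF id[unfolded ideal_prod_def]]) (auto intro: key)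
qed

lemma red: "star_reduction t_closure Dd J0 I0"
  unfolding star_reduction_def
proof (intro conjI J0_ideal J0_sub)
  have p1: "ideal_pow Dd I0 (Suc 0) = I0"
    using prod_D_right[OF I0_ideal] by (simp only: ideal_pow.simps)
  have p2: "ideal_pow Dd I0 (Suc (Suc 0)) = ideal_prod Dd I0 I0"
    using p1 by (simp only: ideal_pow.simps)
  have "t_closure Dd (ideal_prod Dd J0 (ideal_pow Dd I0 (Suc 0))) = t_closure Dd (ideal_pow Dd I0 (Suc (Suc 0)))"
    unfolding p1 p2 prod_eq ..
  thus "\<exists>n. t_closure Dd (ideal_prod Dd J0 (ideal_pow Dd I0 n)) = t_closure Dd (ideal_pow Dd I0 (Suc n))"
    by blast
qed

lemma xex: "\<exists>x\<in>Dd. x \<noteq> 0 \<and> (\<forall>m\<ge>1. zorder x (of_nat m) = int (m - 1))"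
proof -
  have eq: "{m. 1 \<le> m \<and> (\<lambda>m::nat. m - 1) m > 0} = {2..}" by auto
  have inf: "infinite {m. 1 \<le> m \<and> (\<lambda>m::nat. m - 1) m > 0}"
    unfolding eq by (rule infinite_Ici)
  from EX[OF inf] obtain f where "f \<in> Dd" "f \<noteq> 0" "\<forall>m\<ge>1. zorder f (of_nat m) = int ((\<lambda>m. m - 1) m)"
    by blast
  thus ?thesis by blast
qed

lemma not_basic: "t_closure Dd J0 \<noteq> t_closure Dd I0"
proof -
  obtain x where xD: "x \<in> Dd" and x0: "x \<noteq> 0" and xm: "\<forall>m\<ge>1. zorder x (of_nat m) = int (m - 1)"
    using xex by auto
  have xI: "x \<in> I0" unfolding I0_def
    using xD xm DIVpw[OF xD x0] by (auto intro!: exI[of _ 1])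
  have "x \<in> t_closure Dd I0"
  proof -
    define K where "K = ideal_gen Dd {x}"
    have "fin_gen_ideal Dd K" unfolding fin_gen_ideal_def K_def using xD by auto
    moreover have "K \<subseteq> I0" unfolding K_def using xI by (intro gen_min[OF I0_ideal]) auto
    moreover have "x \<in> v_closure Dd K"
    proof -
      have "x \<in> K" unfolding K_def using xD gen_sub[of "{x}"] by auto
      moreover have "K \<subseteq> Dd" unfolding K_def using xD gen_D[of "{x}"] by auto
      ultimately show ?thesis using v_sub by blast
    qed
    ultimately show ?thesis unfolding t_closure_def by blast
  qed
  moreover have "x \<notin> t_closure Dd J0"
  proof
    assume "x \<in> t_closure Dd J0"
    then obtain K where K: "fin_gen_ideal Dd K" "K \<subseteq> J0" "x \<in> v_closure Dd K"
      unfolding t_closure_def by blast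
    then obtain F where F: "finite F" "F \<subseteq> Dd" "K = ideal_gen Dd F"
      unfolding fin_gen_ideal_def by auto
    have "\<forall>f\<in>F. \<exists>N. \<forall>m\<ge>N. rdvd Dd (pw (of_nat m) m) f"
    proof
      fix f assume "f \<in> F"
      hence "f \<in> J0" using gen_sub[OF F(2)] F(3) K(2) by auto
      thus "\<exists>N. \<forall>m\<ge>N. rdvd Dd (pw (of_nat m) m) f" unfolding J0_def by auto
    qed
    from bchoice[OF this] obtain Nf where Nf: "\<forall>f\<in>F. \<forall>m\<ge>Nf f. rdvd Dd (pw (of_nat m) m) f"
      by blast
    define M where "M = Suc (\<Sum>f\<in>F. Nf f)"
    have "Nf f \<le> M" if "f \<in> F" for f
      using member_le_sum[of f F Nf] that F(1) unfolding M_def by auto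
    hence dF: "rdvd Dd (pw (of_nat M) M) f" if "f \<in> F" for f using Nf that by auto
    have "\<forall>a\<in>K. rdvd Dd (pw (of_nat M) M) a"
      using gen_dvd[OF pw_D F(2) dF] F(3) by auto
    hence "rdvd Dd (pw (of_nat M) M) x" using VC1[OF K(3)] by blast
    hence "int M \<le> zorder x (of_nat M)" using DIVpw[OF xD x0] by auto
    moreover have "zorder x (of_nat M) = int (M - 1)" using xm[rule_format, of M] unfolding M_def by simp
    ultimately show False unfolding M_def by simp
  qed
  ultimately show ?thesis by blast
qed

theorem mainTheorem15:
  shows "completely_integrally_closed entire_functions
    \<and> (\<forall>I. is_ideal entire_functions I \<and> I \<noteq> {0} \<longrightarrow> star_basic v_closure entire_functions I)
    \<and> \<not> (\<forall>I. is_ideal entire_functions I \<and> I \<noteq> {0} \<longrightarrow> star_basic t_closure entire_functions I)"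
proof (intro conjI)
  show "completely_integrally_closed entire_functions" by (rule cic)
  show "\<forall>I. is_ideal entire_functions I \<and> I \<noteq> {0} \<longrightarrow> star_basic v_closure entire_functions I"
    using vbasic by blast
  show "\<not> (\<forall>I. is_ideal entire_functions I \<and> I \<noteq> {0} \<longrightarrow> star_basic t_closure entire_functions I)"
  proof
    assume H: "\<forall>I. is_ideal entire_functions I \<and> I \<noteq> {0} \<longrightarrow> star_basic t_closure entire_functions I"
    obtain x where xD: "x \<in> Dd" and x0: "x \<noteq> 0" and xm: "\<forall>m\<ge>1. zorder x (of_nat m) = int (m - 1)"
      using xex by auto
    have "x \<in> I0" unfolding I0_def
      using xD xm DIVpw[OF xD x0] by (auto intro!: exI[of _ 1])
    hence "I0 \<noteq> {0}" using x0 by auto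
    hence "star_basic t_closure Dd I0" using H I0_ideal by blast
    thus False using red not_basic unfolding star_basic_def by blast
  qed
qed

end
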